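(* Let $G^1$ and $G^2$ be orable graphs. Then their Cartesian product $G^1\times G^2$ is orable.
   Context: A graph is a tuple $\langle V,s_1,s_2,\mathsf{null},\mathsf{root}\rangle$ with $V$ finite, $\mathsf{root}\neq\mathsf{null}$ in $V$, $s_1,s_2\subseteq V\times V$, and $\langle\mathsf{null},x\rangle\in s_i$ iff $x=\mathsf{null}$. A graph is orable if for all nodes $x$: $\langle\mathsf{root},x\rangle\in s_2$ iff $x=\mathsf{null}$. For $G^j=\langle V^j,s^j_1,s^j_2,\mathsf{null}^j,\mathsf{root}^j\rangle$ ($j=1,2$), the Cartesian product $G^1\times G^2=\langle V^0,s^0_1,s^0_2,\mathsf{null}^0,\mathsf{root}^0\rangle$ has $\mathsf{null}^0=\langle\mathsf{null}^1,\mathsf{null}^2\rangle$, $\mathsf{root}^0=\langle\mathsf{root}^1,\mathsf{root}^2\rangle$, $V^0=\{\mathsf{null}^0,\mathsf{root}^0\}\cup(V^1\setminus\{\mathsf{null}^1,\mathsf{root}^1\})\times(V^2\setminus\{\mathsf{null}^2,\mathsf{root}^2\})$, and $s^0_i$ is the set of pairs $\langle\langle x^1,x^2\rangle,\langle y^1,y^2\rangle\rangle$ of elements of $V^0$ with $\langle x^1,y^1\rangle\in s^1_i$ and $\langle x^2,y^2\rangle\in s^2_i$. *)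

theory Defs
  imports Main
begin

record 'v graph =
  V :: "'v set"
  s1 :: "('v \<times> 'v) set"
  s2 :: "('v \<times> 'v) set"
  null :: 'v
  root :: 'v

definition is_graph :: "'v graph \<Rightarrow> bool" where
  "is_graph G \<longleftrightarrow>
     finite (V G) \<and> null G \<in> V G \<and> root G \<in> V G \<and> root G \<noteq> null G \<and>
     s1 G \<subseteq> V G \<times> V G \<and> s2 G \<subseteq> V G \<times> V G \<and>
     (\<forall>x. (null G, x) \<in> s1 G \<longleftrightarrow> x = null G) \<and>
     (\<forall>x. (null G, x) \<in> s2 G \<longleftrightarrow> x = null G)"

definition orable :: "'v graph \<Rightarrow> bool" where
  "orable G \<longleftrightarrow> is_graph G \<and> (\<forall>x. (root G, x) \<in> s2 G \<longleftrightarrow> x = null G)"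

definition cart_prod :: "'a graph \<Rightarrow> 'b graph \<Rightarrow> ('a \<times> 'b) graph" where
  "cart_prod G1 G2 =
    (let N = (null G1, null G2); R = (root G1, root G2);
         V0 = {N, R} \<union> (V G1 - {null G1, root G1}) \<times> (V G2 - {null G2, root G2})
     in \<lparr> V = V0,
          s1 = {(x, y). x \<in> V0 \<and> y \<in> V0 \<and> (fst x, fst y) \<in> s1 G1 \<and> (snd x, snd y) \<in> s1 G2},
          s2 = {(x, y). x \<in> V0 \<and> y \<in> V0 \<and> (fst x, fst y) \<in> s2 G1 \<and> (snd x, snd y) \<in> s2 G2},
          null = N, root = R \<rparr>)"

end

theory Submission
  imports Defs
begin

theorem proposition31:
  fixes G1 :: "'a graph" and G2 :: "'b graph"
  assumes "orable G1" and "orable G2"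
  shows "orable (cart_prod G1 G2)"
  using assms
  unfolding orable_def is_graph_def cart_prod_def Let_def
  by (auto simp: Let_def)

end
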